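(* Let $\alpha\in(0,\infty)^T$ and let $u_t(x)=\frac{1}{\alpha_t}[1-\exp(-\alpha_t x)]$ for $t\in\mathbb{T}$. For every $W\in L^\infty$, the optimal intertemporal risk allocation $(X_t)_{t\in\mathbb{T}}\in\mathcal{A}(W)$ of $W$ exists, is unique, and is given by $\exp(-\alpha_t\tilde X_t)=M_t(\alpha,W)$ for $t\in\mathbb{T}$, i.e. $X_t=-\frac{B_t}{\alpha_t}\log M_t(\alpha,W)$.
   Context: Let $T\ge 1$ be an integer and $\mathbb{T}=\{1,\dots,T\}$. Let $(\Omega,\mathcal{F},(\mathcal{F}_t)_{t\in\{0,1,\dots,T\}},P)$ be a filtered probability space and $L^{\infty}=L^{\infty}(\Omega,\mathcal{F}_T,P)$; write $E_t[Y]=E[Y\mid\mathcal{F}_t]$. Let $(r_t)_{t\in\mathbb{T}}$ be a bounded, nonnegative, predictable process, $B_0=1$, $B_t=\prod_{k=1}^t(1+r_k)$, and $\tilde X_t=X_t/B_t$. For $W\in L^\infty$, $\mathcal{A}(W)$ is the set of $(\mathcal{F}_t)$-adapted processes $(Y_t)_{t\in\mathbb{T}}$ with $Y_t\in L^\infty$ and $\sum_{t\in\mathbb{T}}\tilde Y_t=W$ a.s. An allocation $(X_t)\in\mathcal{A}(W)$ is optimal if it attains $U(W)=\sup\{\sum_{t\in\mathbb{T}}E[u_t(\tilde Y_t)]:(Y_t)\in\mathcal{A}(W)\}$. For $\alpha\in(0,\infty)^T$ define $\beta_t$ by $1/\beta_t=\sum_{k=t}^T 1/\alpha_k$. Define $L_T(\alpha,W)=\exp(-\alpha_T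 W)$, $L_{t-1}(\alpha,W)=E_{t-1}[L_t(\alpha,W)]^{\beta_{t-1}/\beta_t}$ ($t=2,\dots,T$), $M_1(\alpha,W)=L_1(\alpha,W)$ and $M_t(\alpha,W)=L_t(\alpha,W)\prod_{k=1}^{t-1}L_k(\alpha,W)^{-\beta_{k+1}/\alpha_k}$ ($t=2,\dots,T$). *)

theory Defs
  imports "HOL-Probability.Probability"
begin

definition disc :: "(nat \<Rightarrow> 'a \<Rightarrow> real) \<Rightarrow> nat \<Rightarrow> 'a \<Rightarrow> real" where
  "disc r t \<omega> = (\<Prod>k\<in>{1..t}. 1 + r k \<omega>)"

definition expu :: "(nat \<Rightarrow> real) \<Rightarrow> nat \<Rightarrow> real \<Rightarrow> real" where
  "expu \<alpha> t x = (1 / \<alpha> t) * (1 - exp (- \<alpha> t * x))"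

definition betaT :: "(nat \<Rightarrow> real) \<Rightarrow> nat \<Rightarrow> nat \<Rightarrow> real" where
  "betaT \<alpha> T t = 1 / (\<Sum>k\<in>{t..T}. 1 / \<alpha> k)"

text \<open>Essentially bounded (representative of an element of L-infinity).\<close>
definition ess_bounded :: "'a measure \<Rightarrow> ('a \<Rightarrow> real) \<Rightarrow> bool" where
  "ess_bounded M f \<longleftrightarrow> (\<exists>C. AE \<omega> in M. \<bar>f \<omega>\<bar> \<le> C)"

text \<open>Backward recursion: Lrec k = L_{T-k}.\<close>
fun Lrec :: "'a measure \<Rightarrow> (nat \<Rightarrow> 'a measure) \<Rightarrow> (nat \<Rightarrow> real) \<Rightarrow> nat \<Rightarrow> ('a \<Rightarrow> real)
              \<Rightarrow> nat \<Rightarrow> 'a \<Rightarrow> real" where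
  "Lrec M F \<alpha> T W 0 = (\<lambda>\<omega>. exp (- \<alpha> T * W \<omega>))"
| "Lrec M F \<alpha> T W (Suc k) =
     (\<lambda>\<omega>. (real_cond_exp M (F (T - Suc k)) (Lrec M F \<alpha> T W k) \<omega>)
             powr (betaT \<alpha> T (T - Suc k) / betaT \<alpha> T (T - k)))"

definition Lfun :: "'a measure \<Rightarrow> (nat \<Rightarrow> 'a measure) \<Rightarrow> (nat \<Rightarrow> real) \<Rightarrow> nat \<Rightarrow> ('a \<Rightarrow> real)
              \<Rightarrow> nat \<Rightarrow> 'a \<Rightarrow> real" where
  "Lfun M F \<alpha> T W t = Lrec M F \<alpha> T W (T - t)"

definition Mfun :: "'a measure \<Rightarrow> (nat \<Rightarrow> 'a measure) \<Rightarrow> (nat \<Rightarrow> real) \<Rightarrow> nat \<Rightarrow> ('a \<Rightarrow> real)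
              \<Rightarrow> nat \<Rightarrow> 'a \<Rightarrow> real" where
  "Mfun M F \<alpha> T W t \<omega> = Lfun M F \<alpha> T W t \<omega> *
      (\<Prod>k\<in>{1..<t}. Lfun M F \<alpha> T W k \<omega> powr (- betaT \<alpha> T (k + 1) / \<alpha> k))"

definition admissible :: "'a measure \<Rightarrow> (nat \<Rightarrow> 'a measure) \<Rightarrow> (nat \<Rightarrow> 'a \<Rightarrow> real) \<Rightarrow> nat
              \<Rightarrow> ('a \<Rightarrow> real) \<Rightarrow> (nat \<Rightarrow> 'a \<Rightarrow> real) \<Rightarrow> bool" where
  "admissible M F r T W Y \<longleftrightarrow>
     (\<forall>t\<in>{1..T}. Y t \<in> borel_measurable (F t) \<and> ess_bounded M (Y t)) \<and>
     (AE \<omega> in M. (\<Sum>t\<in>{1..T}. Y t \<omega> / disc r t \<omega>) = W \<omega>)"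

definition total_util :: "'a measure \<Rightarrow> (nat \<Rightarrow> 'a \<Rightarrow> real) \<Rightarrow> (nat \<Rightarrow> real) \<Rightarrow> nat
              \<Rightarrow> (nat \<Rightarrow> 'a \<Rightarrow> real) \<Rightarrow> real" where
  "total_util M r \<alpha> T Y = (\<Sum>t\<in>{1..T}. integral\<^sup>L M (\<lambda>\<omega>. expu \<alpha> t (Y t \<omega> / disc r t \<omega>)))"

definition optimal :: "'a measure \<Rightarrow> (nat \<Rightarrow> 'a measure) \<Rightarrow> (nat \<Rightarrow> 'a \<Rightarrow> real) \<Rightarrow> (nat \<Rightarrow> real)
              \<Rightarrow> nat \<Rightarrow> ('a \<Rightarrow> real) \<Rightarrow> (nat \<Rightarrow> 'a \<Rightarrow> real) \<Rightarrow> bool" where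
  "optimal M F r \<alpha> T W X \<longleftrightarrow> admissible M F r T W X \<and>
     (\<forall>Y. admissible M F r T W Y \<longrightarrow> total_util M r \<alpha> T Y \<le> total_util M r \<alpha> T X)"

end

theory Submission
  imports Defs
begin


definition posb :: "'a measure \<Rightarrow> ('a \<Rightarrow> real) \<Rightarrow> bool" where
  "posb M f \<longleftrightarrow> (\<exists>c d. 0 < c \<and> (AE \<omega> in M. c \<le> f \<omega> \<and> f \<omega> \<le> d))"

lemma posb_mult: "posb M f \<Longrightarrow> posb M g \<Longrightarrow> posb M (\<lambda>\<omega>. f \<omega> * g \<omega>)"
proof -
  assume "posb M f" "posb M g"
  then obtain c1 d1 c2 d2 where c: "0 < c1" "0 < c2" and
    a1: "AE \<omega> in M. c1 \<le> f \<omega> \<and> f \<omega> \<le> d1" and a2: "AE \<omega> in M. c2 \<le> g \<omega> \<and> g \<omega> \<le> d2"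
    unfolding posb_def by blast
  have "AE \<omega> in M. c1 * c2 \<le> f \<omega> * g \<omega> \<and> f \<omega> * g \<omega> \<le> d1 * d2"
    using a1 a2 apply eventually_elim
    using c by (auto intro!: mult_mono order_trans[OF _ mult_mono])
  then show ?thesis unfolding posb_def using c by (intro exI[of _ "c1*c2"] exI[of _ "d1*d2"]) auto
qed

lemma powr_bnd:
  fixes c d x e :: real
  assumes "0 < c" "c \<le> x" "x \<le> d"
  shows "exp (-(\<bar>e\<bar> * (\<bar>ln c\<bar> + \<bar>ln d\<bar>))) \<le> x powr e \<and> x powr e \<le> exp (\<bar>e\<bar> * (\<bar>ln c\<bar> + \<bar>ln d\<bar>))"
proof -
  have x: "0 < x" using assms by auto
  have "ln c \<le> ln x" "ln x \<le> ln d" using assms x by auto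
  then have "\<bar>ln x\<bar> \<le> \<bar>ln c\<bar> + \<bar>ln d\<bar>" by auto
  then have "\<bar>e * ln x\<bar> \<le> \<bar>e\<bar> * (\<bar>ln c\<bar> + \<bar>ln d\<bar>)"
    by (simp add: abs_mult mult_left_mono)
  then show ?thesis using x by (simp add: powr_def abs_le_iff)
qed

lemma posb_powr: "posb M f \<Longrightarrow> posb M (\<lambda>\<omega>. f \<omega> powr e)"
proof -
  assume "posb M f"
  then obtain c d where c: "0 < c" and a: "AE \<omega> in M. c \<le> f \<omega> \<and> f \<omega> \<le> d"
    unfolding posb_def by blast
  have "AE \<omega> in M. exp (-(\<bar>e\<bar> * (\<bar>ln c\<bar> + \<bar>ln d\<bar>))) \<le> f \<omega> powr e \<and> f \<omega> powr e \<le> exp (\<bar>e\<bar> * (\<bar>ln c\<bar> + \<bar>ln d\<bar>))"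
    using a apply eventually_elim using powr_bnd c by blast
  then show ?thesis unfolding posb_def by (intro exI[of _ "exp (-(\<bar>e\<bar> * (\<bar>ln c\<bar> + \<bar>ln d\<bar>)))"] exI) auto
qed

lemma posb_prod: "finite A \<Longrightarrow> (\<And>k. k \<in> A \<Longrightarrow> posb M (f k)) \<Longrightarrow> posb M (\<lambda>\<omega>. \<Prod>k\<in>A. f k \<omega>)"
proof (induction A rule: finite_induct)
  case empty
  then show ?case unfolding posb_def by (intro exI[of _ 1]) auto
next
  case (insert x F)
  then show ?case using posb_mult[of M "f x" "\<lambda>\<omega>. \<Prod>k\<in>F. f k \<omega>"] by simp
qed

lemma posb_pos: "posb M f \<Longrightarrow> AE \<omega> in M. 0 < f \<omega>"
  unfolding posb_def by (auto elim: eventually_mono)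

lemma posb_abs: "posb M f \<Longrightarrow> \<exists>B. AE \<omega> in M. \<bar>f \<omega>\<bar> \<le> B"
proof -
  assume "posb M f"
  then obtain c d where c: "0 < c" and a: "AE \<omega> in M. c \<le> f \<omega> \<and> f \<omega> \<le> d"
    unfolding posb_def by blast
  have "AE \<omega> in M. \<bar>f \<omega>\<bar> \<le> d" using a apply eventually_elim using c by auto
  then show ?thesis by blast
qed

lemma posb_ln: "posb M f \<Longrightarrow> \<exists>B. AE \<omega> in M. \<bar>ln (f \<omega>)\<bar> \<le> B"
proof -
  assume "posb M f"
  then obtain c d where c: "0 < c" and a: "AE \<omega> in M. c \<le> f \<omega> \<and> f \<omega> \<le> d"
    unfolding posb_def by blast
  have "AE \<omega> in M. \<bar>ln (f \<omega>)\<bar> \<le> \<bar>ln c\<bar> + \<bar>ln d\<bar>"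
    using a apply eventually_elim using c
    by (smt (verit, ccfv_SIG) ln_le_cancel_iff)
  then show ?thesis by blast
qed

lemma swap_sum:
  fixes f :: "nat \<Rightarrow> nat \<Rightarrow> real"
  shows "(\<Sum>t\<in>{1..n}. \<Sum>k\<in>{1..<t}. f t k) = (\<Sum>k\<in>{1..<n}. \<Sum>t\<in>{Suc k..n}. f t k)"
proof (induction n)
  case 0 then show ?case by simp
next
  case (Suc n)
  have "(\<Sum>k\<in>{1..<Suc n}. \<Sum>t\<in>{Suc k..Suc n}. f t k) =
        (\<Sum>k\<in>{1..<Suc n}. (\<Sum>t\<in>{Suc k..n}. f t k) + f (Suc n) k)"
    by (intro sum.cong refl) (simp add: sum.atLeast_Suc_atMost_Suc_shift)
  also have "\<dots> = (\<Sum>k\<in>{1..<Suc n}. \<Sum>t\<in>{Suc k..n}. f t k) + (\<Sum>k\<in>{1..<Suc n}. f (Suc n) k)"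
    by (simp add: sum.distrib)
  also have "(\<Sum>k\<in>{1..<Suc n}. \<Sum>t\<in>{Suc k..n}. f t k) = (\<Sum>k\<in>{1..<n}. \<Sum>t\<in>{Suc k..n}. f t k)"
    by (cases n) (auto simp: sum.atLeastLessThan_Suc)
  finally show ?case using Suc by simp
qed




locale setting = prob_space M for M :: "'a measure" +
  fixes F :: "nat \<Rightarrow> 'a measure" and T :: nat
    and r :: "nat \<Rightarrow> 'a \<Rightarrow> real" and \<alpha> :: "nat \<Rightarrow> real" and W :: "'a \<Rightarrow> real"
  assumes T1: "T \<ge> 1"
    and sub: "\<And>t. t \<le> T \<Longrightarrow> subalgebra M (F t)"
    and filt: "\<And>s t. s \<le> t \<Longrightarrow> t \<le> T \<Longrightarrow> sets (F s) \<subseteq> sets (F t)"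
    and rmeas: "\<And>t. t \<in> {1..T} \<Longrightarrow> r t \<in> borel_measurable (F (t - 1))"
    and rbnd: "\<exists>C. \<forall>t\<in>{1..T}. AE \<omega> in M. \<bar>r t \<omega>\<bar> \<le> C"
    and rpos: "\<And>t. t \<in> {1..T} \<Longrightarrow> AE \<omega> in M. r t \<omega> \<ge> 0"
    and apos: "\<And>t. t \<in> {1..T} \<Longrightarrow> \<alpha> t > 0"
    and Wmeas: "W \<in> borel_measurable (F T)" and Wbnd: "ess_bounded M W"
begin

abbreviation "Lf \<equiv> Lfun M F \<alpha> T W"
abbreviation "\<beta> \<equiv> betaT \<alpha> T"
abbreviation "CE t \<equiv> real_cond_exp M (F t)"
definition "S t = (\<Sum>k\<in>{t..T}. 1 / \<alpha> k)"

lemma sfs: "t \<le> T \<Longrightarrow> sigma_finite_subalgebra M (F t)"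
  by (rule finite_measure_subalgebra_is_sigma_finite)
     (simp add: finite_measure_subalgebra_def finite_measure_subalgebra_axioms_def sub finite_measure_axioms)

lemma meas_mono: "s \<le> t \<Longrightarrow> t \<le> T \<Longrightarrow> f \<in> borel_measurable (F s) \<Longrightarrow> f \<in> borel_measurable (F t)"
  by (rule measurable_from_subalg[of "F t" "F s"])
     (use sub[of t] sub[of s] filt[of s t] in \<open>auto simp: subalgebra_def\<close>)

lemma measM: "t \<le> T \<Longrightarrow> f \<in> borel_measurable (F t) \<Longrightarrow> f \<in> borel_measurable M"
  by (rule measurable_from_subalg[OF sub])

lemma integ_bnd: "f \<in> borel_measurable M \<Longrightarrow> AE \<omega> in M. \<bar>f \<omega>\<bar> \<le> (B::real) \<Longrightarrow> integrable M f"
  by (rule integrable_const_bound[where B=B]) auto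

lemma Lrec_props: "n < T \<Longrightarrow> Lrec M F \<alpha> T W n \<in> borel_measurable (F (T - n)) \<and> posb M (Lrec M F \<alpha> T W n)"
proof (induction n)
  case 0
  obtain C where C: "AE \<omega> in M. \<bar>W \<omega>\<bar> \<le> C" using Wbnd unfolding ess_bounded_def by blast
  have aT: "\<alpha> T > 0" using apos T1 by auto
  have "AE \<omega> in M. exp (- \<alpha> T * C) \<le> exp (- \<alpha> T * W \<omega>) \<and> exp (- \<alpha> T * W \<omega>) \<le> exp (\<alpha> T * C)"
    using C apply eventually_elim using aT
    by (auto simp: abs_le_iff mult_left_mono) (metis minus_mult_right mult_left_mono less_imp_le)
  then have "posb M (Lrec M F \<alpha> T W 0)" unfolding posb_def
    by (intro exI[of _ "exp (- \<alpha> T * C)"] exI[of _ "exp (\<alpha> T * C)"]) simp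
  moreover have "Lrec M F \<alpha> T W 0 \<in> borel_measurable (F (T - 0))" using Wmeas by simp
  ultimately show ?case by blast
next
  case (Suc n)
  let ?t = "T - Suc n"
  have IH: "Lrec M F \<alpha> T W n \<in> borel_measurable (F (T - n))" "posb M (Lrec M F \<alpha> T W n)"
    using Suc by auto
  interpret sf: sigma_finite_subalgebra M "F ?t" using sfs by simp
  obtain c d where c: "0 < c" and a: "AE \<omega> in M. c \<le> Lrec M F \<alpha> T W n \<omega> \<and> Lrec M F \<alpha> T W n \<omega> \<le> d"
    using IH(2) unfolding posb_def by blast
  have m: "Lrec M F \<alpha> T W n \<in> borel_measurable M" using IH(1) measM[of "T - n"] by simp
  have "AE \<omega> in M. \<bar>Lrec M F \<alpha> T W n \<omega>\<bar> \<le> \<bar>c\<bar> + \<bar>d\<bar>" using a by eventually_elim auto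
  then have int: "integrable M (Lrec M F \<alpha> T W n)" using integ_bnd m by blast
  have "AE \<omega> in M. c \<le> CE ?t (Lrec M F \<alpha> T W n) \<omega>"
    by (rule sf.real_cond_exp_ge_c[OF int]) (use a in \<open>eventually_elim, auto\<close>)
  moreover have "AE \<omega> in M. CE ?t (Lrec M F \<alpha> T W n) \<omega> \<le> d"
    by (rule sf.real_cond_exp_le_c[OF int]) (use a in \<open>eventually_elim, auto\<close>)
  ultimately have "posb M (CE ?t (Lrec M F \<alpha> T W n))"
    unfolding posb_def using c by (intro exI[of _ c] exI[of _ d]) (auto elim: eventually_elim2)
  then have "posb M (Lrec M F \<alpha> T W (Suc n))"
    using posb_powr by simp
  moreover have "Lrec M F \<alpha> T W (Suc n) \<in> borel_measurable (F (T - Suc n))"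
    by simp
  ultimately show ?case by blast
qed

lemma L_meas: "t \<in> {1..T} \<Longrightarrow> Lf t \<in> borel_measurable (F t)"
  using Lrec_props[of "T - t"] by (simp add: Lfun_def)

lemma L_posb: "t \<in> {1..T} \<Longrightarrow> posb M (Lf t)"
  using Lrec_props[of "T - t"] by (simp add: Lfun_def)

end



context setting
begin

abbreviation "Mf \<equiv> Mfun M F \<alpha> T W"
definition "Pp s \<omega> = (\<Prod>k\<in>{1..<s}. Lf k \<omega> powr (- \<beta> (k + 1) / \<alpha> k))"

lemma Mf_eq: "Mf t \<omega> = Lf t \<omega> * Pp t \<omega>"
  by (simp add: Mfun_def Pp_def)

lemma S_pos: "t \<in> {1..T} \<Longrightarrow> S t > 0"
  unfolding S_def using apos by (intro sum_pos) auto

lemma S_step: "t \<le> T \<Longrightarrow> S t = 1 / \<alpha> t + S (Suc t)"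
  unfolding S_def by (simp add: sum.atLeast_Suc_atMost)

lemma beta_eq: "\<beta> t = 1 / S t"
  by (simp add: betaT_def S_def)

lemma expo: "t \<in> {1..<T} \<Longrightarrow> \<beta> (t+1) / \<beta> t + (- \<beta> (t+1) / \<alpha> t) = 1"
proof -
  assume t: "t \<in> {1..<T}"
  have p: "S (Suc t) > 0" using S_pos[of "Suc t"] t by auto
  have a: "\<alpha> t > 0" using apos t by auto
  have "S t = 1 / \<alpha> t + S (Suc t)" using S_step t by auto
  then show ?thesis using p a by (simp add: beta_eq field_simps)
qed

lemma expo_pos: "t \<in> {1..<T} \<Longrightarrow> \<beta> t / \<beta> (t+1) > 0"
proof -
  assume t: "t \<in> {1..<T}"
  have "S (Suc t) > 0" "S t > 0" using S_pos[of "Suc t"] S_pos[of t] t by auto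
  then show ?thesis by (simp add: beta_eq)
qed

lemma L_rec: "t \<in> {1..<T} \<Longrightarrow> Lf t = (\<lambda>\<omega>. CE t (Lf (t+1)) \<omega> powr (\<beta> t / \<beta> (t+1)))"
proof -
  assume t: "t \<in> {1..<T}"
  then have e: "T - t = Suc (T - Suc t)" by auto
  have "T - Suc (T - Suc t) = t" "T - (T - Suc t) = Suc t" using t by auto
  then show ?thesis unfolding Lfun_def e by simp
qed

lemma CE_posb:
  assumes "t \<le> T" "posb M f" "f \<in> borel_measurable M"
  shows "posb M (CE t f)"
proof -
  interpret sf: sigma_finite_subalgebra M "F t" using sfs assms by simp
  obtain c d where c: "0 < c" and a: "AE \<omega> in M. c \<le> f \<omega> \<and> f \<omega> \<le> d"
    using assms(2) unfolding posb_def by blast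
  have "AE \<omega> in M. \<bar>f \<omega>\<bar> \<le> \<bar>c\<bar> + \<bar>d\<bar>" using a by eventually_elim auto
  then have int: "integrable M f" using integ_bnd assms by blast
  have "AE \<omega> in M. c \<le> CE t f \<omega>"
    by (rule sf.real_cond_exp_ge_c[OF int]) (use a in \<open>eventually_elim, auto\<close>)
  moreover have "AE \<omega> in M. CE t f \<omega> \<le> d"
    by (rule sf.real_cond_exp_le_c[OF int]) (use a in \<open>eventually_elim, auto\<close>)
  ultimately show "posb M (CE t f)"
    unfolding posb_def using c by (intro exI[of _ c] exI[of _ d]) (auto elim: eventually_elim2)
qed

lemma CE_L_eq: "t \<in> {1..<T} \<Longrightarrow> AE \<omega> in M. CE t (Lf (t+1)) \<omega> = Lf t \<omega> powr (\<beta> (t+1) / \<beta> t)"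
proof -
  assume t: "t \<in> {1..<T}"
  have "posb M (CE t (Lf (t+1)))"
    using CE_posb[of t "Lf (t+1)"] L_posb[of "t+1"] L_meas[of "t+1"] measM[of "t+1"] t by auto
  from posb_pos[OF this] show ?thesis
  proof eventually_elim
    case (elim \<omega>)
    have "\<beta> (t+1) / \<beta> t = 1 / (\<beta> t / \<beta> (t+1))" by simp
    have "S t > 0" "S (Suc t) > 0" using S_pos[of t] S_pos[of "Suc t"] t by auto
    then have "\<beta> t \<noteq> 0" "\<beta> (Suc t) \<noteq> 0" by (auto simp: beta_eq)
    then show ?case using expo_pos[OF t] elim unfolding L_rec[OF t]
      by (simp add: powr_powr)
  qed
qed

lemma Pp_meas: "t \<le> T \<Longrightarrow> s \<le> Suc t \<Longrightarrow> Pp s \<in> borel_measurable (F t)"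
  unfolding Pp_def
  by (intro borel_measurable_prod powr_real_measurable measurable_const meas_mono[OF _ _ L_meas]) auto

lemma Pp_posb: "s \<le> Suc T \<Longrightarrow> posb M (Pp s)"
  unfolding Pp_def by (intro posb_prod posb_powr L_posb) auto

lemma Mf_meas: "t \<in> {1..T} \<Longrightarrow> Mf t \<in> borel_measurable (F t)"
  unfolding Mf_eq using L_meas[of t] Pp_meas[of t t] by auto

lemma Mf_posb: "t \<in> {1..T} \<Longrightarrow> posb M (Mf t)"
  unfolding Mf_eq using L_posb[of t] Pp_posb[of t] by (auto intro!: posb_mult)

end



lemma bnd3: "\<bar>a\<bar> \<le> x \<Longrightarrow> \<bar>b\<bar> \<le> y \<Longrightarrow> \<bar>c\<bar> \<le> (z::real) \<Longrightarrow> \<bar>a*b*c\<bar> \<le> x*y*z"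
proof -
  assume h: "\<bar>a\<bar> \<le> x" "\<bar>b\<bar> \<le> y" "\<bar>c\<bar> \<le> z"
  have "\<bar>a*b\<bar> \<le> x*y" unfolding abs_mult by (rule mult_mono) (use h in auto)
  then show ?thesis unfolding abs_mult[of "a*b"] by (rule mult_mono) (use h in auto)
qed

context setting
begin

lemma bnd_of_posb: "posb M f \<Longrightarrow> \<exists>B. AE \<omega> in M. \<bar>f \<omega>\<bar> \<le> B" by (rule posb_abs)

lemma orth:
  assumes t: "t \<in> {1..<T}" and Zm: "Z \<in> borel_measurable (F t)" and Zb: "AE \<omega> in M. \<bar>Z \<omega>\<bar> \<le> B"
  shows "(\<integral>\<omega>. Mf (t+1) \<omega> * Z \<omega> \<partial>M) = (\<integral>\<omega>. Mf t \<omega> * Z \<omega> \<partial>M)"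
proof -
  interpret sf: sigma_finite_subalgebra M "F t" using sfs t by simp
  have tT: "t \<le> T" using t by auto
  define f where "f \<omega> = Pp (t+1) \<omega> * Z \<omega>" for \<omega>
  have fm: "f \<in> borel_measurable (F t)" unfolding f_def using Pp_meas[OF tT, of "t+1"] Zm by simp
  have gm: "Lf (t+1) \<in> borel_measurable M" using L_meas[of "t+1"] measM[of "t+1"] t by auto
  obtain B1 where B1: "AE \<omega> in M. \<bar>Pp (t+1) \<omega>\<bar> \<le> B1" using posb_abs[OF Pp_posb[of "t+1"]] t by auto
  obtain B2 where B2: "AE \<omega> in M. \<bar>Lf (t+1) \<omega>\<bar> \<le> B2" using posb_abs[OF L_posb[of "t+1"]] t by auto
  have "AE \<omega> in M. \<bar>f \<omega> * Lf (t+1) \<omega>\<bar> \<le> B1 * B * B2"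
    using B1 B2 Zb unfolding f_def by eventually_elim (rule bnd3)
  moreover have "(\<lambda>\<omega>. f \<omega> * Lf (t+1) \<omega>) \<in> borel_measurable M"
    using measM[OF tT fm] gm by simp
  ultimately have int: "integrable M (\<lambda>\<omega>. f \<omega> * Lf (t+1) \<omega>)" by (rule integ_bnd[rotated])
  have "(\<integral>\<omega>. Mf (t+1) \<omega> * Z \<omega> \<partial>M) = (\<integral>\<omega>. f \<omega> * Lf (t+1) \<omega> \<partial>M)"
    unfolding f_def Mf_eq by (simp add: ac_simps)
  also have "\<dots> = (\<integral>\<omega>. f \<omega> * CE t (Lf (t+1)) \<omega> \<partial>M)"
    by (rule sf.real_cond_exp_intg(2)[symmetric, OF int fm gm])
  also have "\<dots> = (\<integral>\<omega>. Mf t \<omega> * Z \<omega> \<partial>M)"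
  proof (rule integral_cong_AE)
    show "(\<lambda>\<omega>. f \<omega> * CE t (Lf (t + 1)) \<omega>) \<in> borel_measurable M"
      using measM[OF tT fm] by simp
    show "(\<lambda>\<omega>. Mf t \<omega> * Z \<omega>) \<in> borel_measurable M"
      using measM[OF tT Mf_meas[of t]] measM[OF tT Zm] t by simp
    show "AE \<omega> in M. f \<omega> * CE t (Lf (t + 1)) \<omega> = Mf t \<omega> * Z \<omega>"
    proof -
      have Lp: "AE \<omega> in M. 0 < Lf t \<omega>" using posb_pos L_posb[of t] t by auto
      show ?thesis using CE_L_eq[OF t] Lp
    proof eventually_elim
      case (elim \<omega>)
      have p: "Pp (t+1) \<omega> = Pp t \<omega> * Lf t \<omega> powr (- \<beta> (t + 1) / \<alpha> t)"
        unfolding Pp_def using t by (simp add: prod.atLeastLessThan_Suc)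
      have "Lf t \<omega> powr (- \<beta> (t + 1) / \<alpha> t) * Lf t \<omega> powr (\<beta> (t + 1) / \<beta> t)
            = Lf t \<omega> powr (\<beta> (t+1) / \<beta> t + (- \<beta> (t+1) / \<alpha> t))"
        by (simp add: powr_add[symmetric] add.commute)
      also have "\<dots> = Lf t \<omega>" using expo[OF t] elim by simp
      finally have q: "Lf t \<omega> powr (- \<beta> (t + 1) / \<alpha> t) * Lf t \<omega> powr (\<beta> (t + 1) / \<beta> t) = Lf t \<omega>" .
      have "f \<omega> * CE t (Lf (t + 1)) \<omega> = (Pp t \<omega> * Z \<omega>) * (Lf t \<omega> powr (- \<beta> (t + 1) / \<alpha> t) * Lf t \<omega> powr (\<beta> (t + 1) / \<beta> t))"
        unfolding f_def p elim(1) by (simp only: mult_ac)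
      then show ?case unfolding q Mf_eq by (simp only: mult_ac)
    qed
    qed
  qed
  finally show ?thesis .
qed

lemma orth_iter:
  assumes t: "t \<in> {1..T}" and Zm: "Z \<in> borel_measurable (F t)" and Zb: "AE \<omega> in M. \<bar>Z \<omega>\<bar> \<le> B"
  shows "t + n \<le> T \<Longrightarrow> (\<integral>\<omega>. Mf (t+n) \<omega> * Z \<omega> \<partial>M) = (\<integral>\<omega>. Mf t \<omega> * Z \<omega> \<partial>M)"
proof (induction n)
  case 0 then show ?case by simp
next
  case (Suc n)
  have "(\<integral>\<omega>. Mf (t+n+1) \<omega> * Z \<omega> \<partial>M) = (\<integral>\<omega>. Mf (t+n) \<omega> * Z \<omega> \<partial>M)"
    by (rule orth[OF _ meas_mono[OF _ _ Zm] Zb]) (use t Suc.prems in auto)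
  then show ?case using Suc by simp
qed

end



lemma exp_strict: "(z::real) \<noteq> 0 \<Longrightarrow> 1 + z < exp z"
proof -
  assume z: "z \<noteq> 0"
  show ?thesis
  proof (cases "1 + z/2 \<ge> 0")
    case True
    have "exp z = exp (z/2) * exp (z/2)" by (simp flip: exp_add)
    also have "\<dots> \<ge> (1 + z/2) * (1 + z/2)"
      using True by (intro mult_mono exp_ge_add_one_self) auto
    finally have "exp z \<ge> 1 + z + z*z/4" by (simp add: algebra_simps)
    moreover have "z*z > 0" using z by (auto simp: zero_less_mult_iff linorder_neq_iff)
    ultimately show ?thesis by linarith
  next
    case False
    then have "1 + z < 0" by linarith
    then show ?thesis by (smt (verit) exp_gt_zero)
  qed
qed

lemma conc_eq:
  fixes a x y :: real
  assumes "a > 0"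
  shows "exp (-a*x)*(y-x) - ((1/a)*(1-exp(-a*y)) - (1/a)*(1-exp(-a*x)))
       = exp(-a*x)/a * (exp (a*(x-y)) - 1 - a*(x-y))"
proof -
  have "exp (-a*y) = exp(-a*x) * exp (a*(x-y))" by (simp add: algebra_simps flip: exp_add)
  then show ?thesis using assms by (simp add: field_simps)
qed

lemma conc_nonneg:
  fixes a x y :: real
  assumes "a > 0"
  shows "0 \<le> exp (-a*x)*(y-x) - ((1/a)*(1-exp(-a*y)) - (1/a)*(1-exp(-a*x)))"
proof -
  have "0 \<le> exp (a*(x-y)) - 1 - a*(x-y)" using exp_ge_add_one_self[of "a*(x-y)"] by linarith
  then show ?thesis unfolding conc_eq[OF assms] using assms by (intro mult_nonneg_nonneg) auto
qed

lemma conc_zero: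
  fixes a x y :: real
  assumes "a > 0" "exp (-a*x)*(y-x) - ((1/a)*(1-exp(-a*y)) - (1/a)*(1-exp(-a*x))) = 0"
  shows "y = x"
proof (rule ccontr)
  assume "y \<noteq> x"
  then have "a*(x-y) \<noteq> 0" using assms by simp
  then have "1 + a*(x-y) < exp (a*(x-y))" by (rule exp_strict)
  then have "exp (a*(x-y)) - 1 - a*(x-y) > 0" by linarith
  then have "exp(-a*x)/a * (exp (a*(x-y)) - 1 - a*(x-y)) > 0" using assms by simp
  moreover have "exp(-a*x)/a * (exp (a*(x-y)) - 1 - a*(x-y)) = 0"
    using assms(2) unfolding conc_eq[OF assms(1)] .
  ultimately show False by linarith
qed

lemma bnd2: "\<bar>a\<bar> \<le> x \<Longrightarrow> \<bar>b\<bar> \<le> (y::real) \<Longrightarrow> \<bar>a*b\<bar> \<le> x*y"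
  unfolding abs_mult by (rule mult_mono) auto

context setting
begin

lemma sum_orth:
  assumes Dm: "\<And>t. t \<in> {1..T} \<Longrightarrow> D t \<in> borel_measurable (F t)"
    and Db: "\<And>t. t \<in> {1..T} \<Longrightarrow> \<exists>B. AE \<omega> in M. \<bar>D t \<omega>\<bar> \<le> B"
    and D0: "AE \<omega> in M. (\<Sum>t\<in>{1..T}. D t \<omega>) = 0"
  shows "(\<Sum>t\<in>{1..T}. \<integral>\<omega>. Mf t \<omega> * D t \<omega> \<partial>M) = 0"
proof -
  have TT: "T \<in> {1..T}" using T1 by auto
  have int: "integrable M (\<lambda>\<omega>. Mf T \<omega> * D t \<omega>)" if t: "t \<in> {1..T}" for t
  proof -
    obtain B where B: "AE \<omega> in M. \<bar>D t \<omega>\<bar> \<le> B" using Db t by blast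
    obtain B1 where B1: "AE \<omega> in M. \<bar>Mf T \<omega>\<bar> \<le> B1" using posb_abs[OF Mf_posb[OF TT]] by blast
    have "AE \<omega> in M. \<bar>Mf T \<omega> * D t \<omega>\<bar> \<le> B1 * B" using B B1 by eventually_elim (rule bnd2)
    moreover have "(\<lambda>\<omega>. Mf T \<omega> * D t \<omega>) \<in> borel_measurable M"
      using measM[OF _ Mf_meas[OF TT]] measM[OF _ Dm[OF t]] t by auto
    ultimately show ?thesis by (rule integ_bnd[rotated])
  qed
  have "(\<Sum>t\<in>{1..T}. \<integral>\<omega>. Mf t \<omega> * D t \<omega> \<partial>M) = (\<Sum>t\<in>{1..T}. \<integral>\<omega>. Mf T \<omega> * D t \<omega> \<partial>M)"
  proof (rule sum.cong[OF refl])
    fix t assume t: "t \<in> {1..T}"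
    obtain B where B: "AE \<omega> in M. \<bar>D t \<omega>\<bar> \<le> B" using Db t by blast
    show "(\<integral>\<omega>. Mf t \<omega> * D t \<omega> \<partial>M) = (\<integral>\<omega>. Mf T \<omega> * D t \<omega> \<partial>M)"
      using orth_iter[OF t Dm[OF t] B, of "T - t"] t by simp
  qed
  also have "\<dots> = (\<integral>\<omega>. (\<Sum>t\<in>{1..T}. Mf T \<omega> * D t \<omega>) \<partial>M)"
    by (rule Bochner_Integration.integral_sum[symmetric]) (rule int)
  also have "\<dots> = (\<integral>\<omega>. 0 \<partial>M)"
  proof (rule integral_cong_AE)
    show "(\<lambda>\<omega>. \<Sum>t\<in>{1..T}. Mf T \<omega> * D t \<omega>) \<in> borel_measurable M"
      using int by (intro borel_measurable_sum) auto
    show "AE \<omega> in M. (\<Sum>t\<in>{1..T}. Mf T \<omega> * D t \<omega>) = 0"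
      using D0 by eventually_elim (simp add: sum_distrib_left[symmetric])
  qed simp
  finally show ?thesis by simp
qed

lemma alg:
  fixes ell :: "nat \<Rightarrow> real"
  shows "(\<Sum>t\<in>{1..T}. -(1/\<alpha> t) * (ell t + (\<Sum>k\<in>{1..<t}. - \<beta> (k+1) / \<alpha> k * ell k))) = -(ell T / \<alpha> T)"
proof -
  have 1: "(\<Sum>t\<in>{1..T}. -(1/\<alpha> t) * (ell t + (\<Sum>k\<in>{1..<t}. - \<beta> (k+1) / \<alpha> k * ell k)))
     = -(\<Sum>t\<in>{1..T}. ell t / \<alpha> t) + (\<Sum>t\<in>{1..T}. \<Sum>k\<in>{1..<t}. (1/\<alpha> t) * (\<beta> (k+1) / \<alpha> k * ell k))"
  proof -
    have "-(1/\<alpha> t) * (ell t + (\<Sum>k\<in>{1..<t}. - \<beta> (k+1) / \<alpha> k * ell k))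
       = -(ell t / \<alpha> t) + (\<Sum>k\<in>{1..<t}. (1/\<alpha> t) * (\<beta> (k+1) / \<alpha> k * ell k))" for t
    proof -
      have "-(1/\<alpha> t) * (ell t + (\<Sum>k\<in>{1..<t}. - \<beta> (k+1) / \<alpha> k * ell k))
         = -(1/\<alpha> t) * ell t + (\<Sum>k\<in>{1..<t}. -(1/\<alpha> t) * (- \<beta> (k+1) / \<alpha> k * ell k))"
        by (simp only: distrib_left sum_distrib_left)
      also have "(\<Sum>k\<in>{1..<t}. -(1/\<alpha> t) * (- \<beta> (k+1) / \<alpha> k * ell k)) = (\<Sum>k\<in>{1..<t}. (1/\<alpha> t) * (\<beta> (k+1) / \<alpha> k * ell k))"
        by (intro sum.cong refl) simp
      finally show ?thesis by simp
    qed
    then have "(\<Sum>t\<in>{1..T}. -(1/\<alpha> t) * (ell t + (\<Sum>k\<in>{1..<t}. - \<beta> (k+1) / \<alpha> k * ell k)))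
       = (\<Sum>t\<in>{1..T}. -(ell t / \<alpha> t) + (\<Sum>k\<in>{1..<t}. (1/\<alpha> t) * (\<beta> (k+1) / \<alpha> k * ell k)))"
      by (intro sum.cong refl)
    then show ?thesis by (simp only: sum.distrib sum_negf)
  qed
  have 2: "(\<Sum>t\<in>{1..T}. \<Sum>k\<in>{1..<t}. (1/\<alpha> t) * (\<beta> (k+1) / \<alpha> k * ell k))
        = (\<Sum>k\<in>{1..<T}. \<Sum>t\<in>{Suc k..T}. (1/\<alpha> t) * (\<beta> (k+1) / \<alpha> k * ell k))"
    by (rule swap_sum)
  have 3: "(\<Sum>t\<in>{Suc k..T}. (1/\<alpha> t) * (\<beta> (k+1) / \<alpha> k * ell k)) = ell k / \<alpha> k" if k: "k \<in> {1..<T}" for k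
  proof -
    have p: "S (Suc k) > 0" using S_pos[of "Suc k"] k by auto
    have "(\<Sum>t\<in>{Suc k..T}. (1/\<alpha> t) * (\<beta> (k+1) / \<alpha> k * ell k)) = S (Suc k) * (\<beta> (k+1) / \<alpha> k * ell k)"
      unfolding S_def by (rule sum_distrib_right[symmetric])
    also have "\<dots> = ell k / \<alpha> k" using p by (simp add: beta_eq)
    finally show ?thesis .
  qed
  have 4: "(\<Sum>t\<in>{1..T}. ell t / \<alpha> t) = (\<Sum>t\<in>{1..<T}. ell t / \<alpha> t) + ell T / \<alpha> T"
    using T1 by (simp add: atLeastLessThanSuc_atLeastAtMost[symmetric] sum.atLeastLessThan_Suc)
  have 5: "(\<Sum>k\<in>{1..<T}. \<Sum>t\<in>{Suc k..T}. (1/\<alpha> t) * (\<beta> (k+1) / \<alpha> k * ell k)) = (\<Sum>k\<in>{1..<T}. ell k / \<alpha> k)"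
    by (rule sum.cong[OF refl 3])
  show ?thesis unfolding 1 2 4 5 by simp
qed

end



lemma div_bnd:
  fixes f g c B :: real
  assumes "0 < c" "c \<le> g" "\<bar>f\<bar> \<le> B"
  shows "\<bar>f / g\<bar> \<le> B / c"
proof -
  have g: "g > 0" using assms by auto
  have "\<bar>f / g\<bar> = \<bar>f\<bar> / g" using g by (simp add: abs_div)
  also have "\<dots> \<le> \<bar>f\<bar> / c" using assms g by (intro divide_left_mono) auto
  also have "\<dots> \<le> B / c" using assms by (intro divide_right_mono) auto
  finally show ?thesis .
qed

context setting
begin

lemma div_posb: "AE \<omega> in M. \<bar>f \<omega>\<bar> \<le> B \<Longrightarrow> posb M g \<Longrightarrow> \<exists>B'. AE \<omega> in M. \<bar>f \<omega> / g \<omega>\<bar> \<le> B'"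
proof -
  assume f: "AE \<omega> in M. \<bar>f \<omega>\<bar> \<le> B" and "posb M g"
  then obtain c d where c: "0 < c" and a: "AE \<omega> in M. c \<le> g \<omega> \<and> g \<omega> \<le> d"
    unfolding posb_def by blast
  have "AE \<omega> in M. \<bar>f \<omega> / g \<omega>\<bar> \<le> B / c" using f a
    by eventually_elim (rule div_bnd, use c in auto)
  then show ?thesis by blast
qed

lemma disc_fun: "disc r t = (\<lambda>\<omega>. \<Prod>k\<in>{1..t}. 1 + r k \<omega>)"
  by (rule ext) (simp add: disc_def)

lemma disc_meas: "t \<in> {1..T} \<Longrightarrow> disc r t \<in> borel_measurable (F t)"
  unfolding disc_fun
  by (intro borel_measurable_prod borel_measurable_add measurable_const meas_mono[OF _ _ rmeas]) auto

lemma disc_posb: "t \<in> {1..T} \<Longrightarrow> posb M (disc r t)"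
proof -
  assume t: "t \<in> {1..T}"
  obtain C where C: "\<forall>k\<in>{1..T}. AE \<omega> in M. \<bar>r k \<omega>\<bar> \<le> C" using rbnd by blast
  have "AE \<omega> in M. \<forall>k\<in>{1..T}. 0 \<le> r k \<omega> \<and> \<bar>r k \<omega>\<bar> \<le> C"
    by (rule AE_finite_allI) (use C rpos in \<open>auto elim: eventually_elim2\<close>)
  then have "AE \<omega> in M. 1 \<le> disc r t \<omega> \<and> disc r t \<omega> \<le> (1 + C) ^ t"
  proof eventually_elim
    case (elim \<omega>)
    have k: "0 \<le> r k \<omega> \<and> r k \<omega> \<le> C" if "k \<in> {1..t}" for k
    proof -
      have "k \<in> {1..T}" using that t by auto
      then have "0 \<le> r k \<omega> \<and> \<bar>r k \<omega>\<bar> \<le> C" using elim by blast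
      then show ?thesis by auto
    qed
    have "1 \<le> disc r t \<omega>" unfolding disc_def using k by (intro prod_ge_1) auto
    moreover have "disc r t \<omega> \<le> (\<Prod>k\<in>{1..t}. 1 + C)" unfolding disc_def
      using k by (intro prod_mono) auto
    ultimately show ?case by simp
  qed
  then show ?thesis unfolding posb_def by (intro exI[of _ 1] exI[of _ "(1 + C) ^ t"]) auto
qed

definition "Xo t \<omega> = - (disc r t \<omega> / \<alpha> t) * ln (Mf t \<omega>)"

lemma Xo_meas: "t \<in> {1..T} \<Longrightarrow> Xo t \<in> borel_measurable (F t)"
proof -
  assume t: "t \<in> {1..T}"
  have [measurable]: "disc r t \<in> borel_measurable (F t)" "Mf t \<in> borel_measurable (F t)"
    using disc_meas Mf_meas t by auto
  have "Xo t = (\<lambda>\<omega>. - (disc r t \<omega> / \<alpha> t) * ln (Mf t \<omega>))" by (rule ext) (simp add: Xo_def)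
  also have "\<dots> \<in> borel_measurable (F t)" by measurable
  finally show ?thesis .
qed

lemma Xo_bnd: "t \<in> {1..T} \<Longrightarrow> \<exists>B. AE \<omega> in M. \<bar>Xo t \<omega>\<bar> \<le> B"
proof -
  assume t: "t \<in> {1..T}"
  obtain B1 where B1: "AE \<omega> in M. \<bar>disc r t \<omega>\<bar> \<le> B1" using posb_abs[OF disc_posb[OF t]] by blast
  obtain B2 where B2: "AE \<omega> in M. \<bar>ln (Mf t \<omega>)\<bar> \<le> B2" using posb_ln[OF Mf_posb[OF t]] by blast
  have a: "\<alpha> t > 0" using apos t by auto
  have "AE \<omega> in M. \<bar>Xo t \<omega>\<bar> \<le> B1 * (1 / \<alpha> t) * B2" using B1 B2
  proof eventually_elim
    case (elim \<omega>)
    have "\<bar>Xo t \<omega>\<bar> = \<bar>disc r t \<omega> * (1 / \<alpha> t) * ln (Mf t \<omega>)\<bar>" by (simp add: Xo_def)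
    also have "\<dots> \<le> B1 * (1 / \<alpha> t) * B2" by (rule bnd3) (use elim a in auto)
    finally show ?case .
  qed
  then show ?thesis by blast
qed

lemma good: "AE \<omega> in M. \<forall>k\<in>{1..T}. 0 < disc r k \<omega> \<and> 0 < Lf k \<omega> \<and> 0 < Mf k \<omega>"
proof (rule AE_finite_allI)
  fix k assume k: "k \<in> {1..T}"
  show "AE \<omega> in M. 0 < disc r k \<omega> \<and> 0 < Lf k \<omega> \<and> 0 < Mf k \<omega>"
    using posb_pos[OF disc_posb[OF k]] posb_pos[OF L_posb[OF k]] posb_pos[OF Mf_posb[OF k]]
    by eventually_elim auto
qed simp

lemma Xo_budget: "AE \<omega> in M. (\<Sum>t\<in>{1..T}. Xo t \<omega> / disc r t \<omega>) = W \<omega>"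
  using good
proof eventually_elim
  case (elim \<omega>)
  define ell where "ell k = ln (Lf k \<omega>)" for k
  have lnM: "ln (Mf t \<omega>) = ell t + (\<Sum>k\<in>{1..<t}. - \<beta> (k+1) / \<alpha> k * ell k)" if t: "t \<in> {1..T}" for t
  proof -
    have pk: "\<And>k. k \<in> {1..<t} \<Longrightarrow> 0 < Lf k \<omega>" using elim t by auto
    have pp: "Pp t \<omega> > 0" unfolding Pp_def using pk by (intro prod_pos ballI) (metis powr_gt_zero less_irrefl)
    have lt: "0 < Lf t \<omega>" using elim t by blast
    have "ln (Mf t \<omega>) = ln (Lf t \<omega>) + ln (Pp t \<omega>)" unfolding Mf_eq using pp lt by (simp add: ln_mult)
    also have "ln (Pp t \<omega>) = (\<Sum>k\<in>{1..<t}. ln (Lf k \<omega> powr (- \<beta> (k+1) / \<alpha> k)))"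
      unfolding Pp_def
    proof (rule ln_prod)
      fix k assume "k \<in> {1..<t}"
      then have "0 < Lf k \<omega>" by (rule pk)
      then show "Lf k \<omega> powr (- \<beta> (k+1) / \<alpha> k) \<noteq> 0" by simp
    qed simp
    finally show ?thesis unfolding ell_def by simp
  qed
  have "(\<Sum>t\<in>{1..T}. Xo t \<omega> / disc r t \<omega>) = (\<Sum>t\<in>{1..T}. -(1/\<alpha> t) * (ell t + (\<Sum>k\<in>{1..<t}. - \<beta> (k+1) / \<alpha> k * ell k)))"
  proof (intro sum.cong refl)
    fix t assume t: "t \<in> {1..T}"
    have "0 < disc r t \<omega>" using elim t by blast
    then have "disc r t \<omega> \<noteq> 0" by simp
    then show "Xo t \<omega> / disc r t \<omega> = -(1/\<alpha> t) * (ell t + (\<Sum>k\<in>{1..<t}. - \<beta> (k+1) / \<alpha> k * ell k))"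
      unfolding lnM[OF t, symmetric] Xo_def by simp
  qed
  also have "\<dots> = -(ell T / \<alpha> T)" by (rule alg)
  also have "ell T = - \<alpha> T * W \<omega>" unfolding ell_def by (simp add: Lfun_def)
  finally show ?case using apos[of T] T1 by simp
qed

lemma Xo_adm: "admissible M F r T W Xo"
  unfolding admissible_def ess_bounded_def using Xo_meas Xo_bnd Xo_budget by blast

end



context setting
begin

lemma expu_meas: "h \<in> borel_measurable M \<Longrightarrow> (\<lambda>\<omega>. expu \<alpha> t (h \<omega>)) \<in> borel_measurable M"
  unfolding expu_def by measurable

lemma expu_int:
  assumes t: "t \<in> {1..T}" and hm: "h \<in> borel_measurable M" and hb: "AE \<omega> in M. \<bar>h \<omega>\<bar> \<le> B"
  shows "integrable M (\<lambda>\<omega>. expu \<alpha> t (h \<omega>))"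
proof (rule integ_bnd[OF expu_meas[OF hm]])
  have a: "\<alpha> t > 0" using apos t by auto
  show "AE \<omega> in M. \<bar>expu \<alpha> t (h \<omega>)\<bar> \<le> (1 / \<alpha> t) * (1 + exp (\<alpha> t * B))" using hb
  proof eventually_elim
    case (elim \<omega>)
    have "- \<alpha> t * h \<omega> \<le> \<alpha> t * B" using elim a
      by (metis abs_le_iff minus_mult_left minus_mult_right mult_left_mono less_imp_le)
    then have "exp (- \<alpha> t * h \<omega>) \<le> exp (\<alpha> t * B)" by simp
    then have "\<bar>1 - exp (- \<alpha> t * h \<omega>)\<bar> \<le> 1 + exp (\<alpha> t * B)" by (smt (verit) exp_gt_zero)
    then show ?case unfolding expu_def using a by (simp add: abs_mult divide_right_mono)
  qed
qed

lemma gap: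
  assumes adm: "admissible M F r T W Y"
  shows "total_util M r \<alpha> T Y \<le> total_util M r \<alpha> T Xo"
    and "total_util M r \<alpha> T Xo \<le> total_util M r \<alpha> T Y \<Longrightarrow> (\<forall>t\<in>{1..T}. AE \<omega> in M. Y t \<omega> = Xo t \<omega>)"
proof -
  have Ym: "\<And>t. t \<in> {1..T} \<Longrightarrow> Y t \<in> borel_measurable (F t)"
    and Yb: "\<And>t. t \<in> {1..T} \<Longrightarrow> \<exists>B. AE \<omega> in M. \<bar>Y t \<omega>\<bar> \<le> B"
    and Ys: "AE \<omega> in M. (\<Sum>t\<in>{1..T}. Y t \<omega> / disc r t \<omega>) = W \<omega>"
    using adm unfolding admissible_def ess_bounded_def by auto
  define Yt where "Yt t \<omega> = Y t \<omega> / disc r t \<omega>" for t \<omega>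
  define Xt where "Xt t \<omega> = Xo t \<omega> / disc r t \<omega>" for t \<omega>
  define D where "D t \<omega> = Yt t \<omega> - Xt t \<omega>" for t \<omega>
  define g where "g t \<omega> = Mf t \<omega> * D t \<omega> - (expu \<alpha> t (Yt t \<omega>) - expu \<alpha> t (Xt t \<omega>))" for t \<omega>
  have Ytm: "Yt t \<in> borel_measurable (F t)" if t: "t \<in> {1..T}" for t
    using Ym[OF t] disc_meas[OF t] unfolding Yt_def by measurable
  have Xtm: "Xt t \<in> borel_measurable (F t)" if t: "t \<in> {1..T}" for t
    using Xo_meas[OF t] disc_meas[OF t] unfolding Xt_def by measurable
  have Ytb: "\<exists>B. AE \<omega> in M. \<bar>Yt t \<omega>\<bar> \<le> B" if t: "t \<in> {1..T}" for t
    using Yb[OF t] div_posb[OF _ disc_posb[OF t]] unfolding Yt_def by blast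
  have Xtb: "\<exists>B. AE \<omega> in M. \<bar>Xt t \<omega>\<bar> \<le> B" if t: "t \<in> {1..T}" for t
    using Xo_bnd[OF t] div_posb[OF _ disc_posb[OF t]] unfolding Xt_def by blast
  have Dm: "D t \<in> borel_measurable (F t)" if t: "t \<in> {1..T}" for t
    using Ytm[OF t] Xtm[OF t] unfolding D_def by measurable
  have Db: "\<exists>B. AE \<omega> in M. \<bar>D t \<omega>\<bar> \<le> B" if t: "t \<in> {1..T}" for t
  proof -
    obtain B1 B2 where "AE \<omega> in M. \<bar>Yt t \<omega>\<bar> \<le> B1" "AE \<omega> in M. \<bar>Xt t \<omega>\<bar> \<le> B2"
      using Ytb[OF t] Xtb[OF t] by blast
    then have "AE \<omega> in M. \<bar>D t \<omega>\<bar> \<le> B1 + B2" unfolding D_def by eventually_elim auto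
    then show ?thesis by blast
  qed
  have D0: "AE \<omega> in M. (\<Sum>t\<in>{1..T}. D t \<omega>) = 0"
    using Ys Xo_budget by eventually_elim (simp add: D_def Yt_def Xt_def sum_subtractf)
  have orth0: "(\<Sum>t\<in>{1..T}. \<integral>\<omega>. Mf t \<omega> * D t \<omega> \<partial>M) = 0"
    by (rule sum_orth[OF Dm Db D0])
  have intMD: "integrable M (\<lambda>\<omega>. Mf t \<omega> * D t \<omega>)" if t: "t \<in> {1..T}" for t
  proof -
    obtain B where B: "AE \<omega> in M. \<bar>D t \<omega>\<bar> \<le> B" using Db[OF t] by blast
    obtain B1 where B1: "AE \<omega> in M. \<bar>Mf t \<omega>\<bar> \<le> B1" using posb_abs[OF Mf_posb[OF t]] by blast
    have "AE \<omega> in M. \<bar>Mf t \<omega> * D t \<omega>\<bar> \<le> B1 * B" using B1 B by eventually_elim (rule bnd2)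
    moreover have "(\<lambda>\<omega>. Mf t \<omega> * D t \<omega>) \<in> borel_measurable M"
      using measM[OF _ Mf_meas[OF t]] measM[OF _ Dm[OF t]] t by auto
    ultimately show ?thesis by (rule integ_bnd[rotated])
  qed
  have intY: "integrable M (\<lambda>\<omega>. expu \<alpha> t (Yt t \<omega>))" if t: "t \<in> {1..T}" for t
    using Ytb[OF t] expu_int[OF t measM[OF _ Ytm[OF t]]] t by auto
  have intX: "integrable M (\<lambda>\<omega>. expu \<alpha> t (Xt t \<omega>))" if t: "t \<in> {1..T}" for t
    using Xtb[OF t] expu_int[OF t measM[OF _ Xtm[OF t]]] t by auto
  have intg: "integrable M (g t)" if t: "t \<in> {1..T}" for t
    unfolding g_def[abs_def] using intMD[OF t] intY[OF t] intX[OF t] by auto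
  have gint: "(\<integral>\<omega>. g t \<omega> \<partial>M) = (\<integral>\<omega>. Mf t \<omega> * D t \<omega> \<partial>M)
      - ((\<integral>\<omega>. expu \<alpha> t (Yt t \<omega>) \<partial>M) - (\<integral>\<omega>. expu \<alpha> t (Xt t \<omega>) \<partial>M))" if t: "t \<in> {1..T}" for t
    unfolding g_def using intMD[OF t] intY[OF t] intX[OF t] by simp
  have MX: "AE \<omega> in M. \<forall>t\<in>{1..T}. Mf t \<omega> = exp (- \<alpha> t * Xt t \<omega>)"
    using good
  proof eventually_elim
    case (elim \<omega>)
    show ?case
    proof
      fix t assume t: "t \<in> {1..T}"
      have p: "0 < disc r t \<omega>" "0 < Mf t \<omega>" using elim t by blast+
      have a: "\<alpha> t > 0" using apos t by auto
      have "- \<alpha> t * Xt t \<omega> = ln (Mf t \<omega>)" unfolding Xt_def Xo_def using p a by (simp add: field_simps)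
      then show "Mf t \<omega> = exp (- \<alpha> t * Xt t \<omega>)" using p by simp
    qed
  qed
  have gpos: "AE \<omega> in M. \<forall>t\<in>{1..T}. 0 \<le> g t \<omega>" using MX
  proof eventually_elim
    case (elim \<omega>)
    show ?case
    proof
      fix t assume t: "t \<in> {1..T}"
      have a: "\<alpha> t > 0" using apos t by auto
      show "0 \<le> g t \<omega>" unfolding g_def D_def expu_def using elim t conc_nonneg[OF a, of "Xt t \<omega>" "Yt t \<omega>"] by simp
    qed
  qed
  have gint_nn: "0 \<le> (\<integral>\<omega>. g t \<omega> \<partial>M)" if t: "t \<in> {1..T}" for t
  proof (rule integral_nonneg_AE)
    show "AE \<omega> in M. 0 \<le> g t \<omega>" using gpos by eventually_elim (use t in auto)
  qed
  have diff: "total_util M r \<alpha> T Y - total_util M r \<alpha> T Xo = - (\<Sum>t\<in>{1..T}. \<integral>\<omega>. g t \<omega> \<partial>M)"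
  proof -
    have "(\<Sum>t\<in>{1..T}. \<integral>\<omega>. g t \<omega> \<partial>M) = (\<Sum>t\<in>{1..T}. \<integral>\<omega>. Mf t \<omega> * D t \<omega> \<partial>M)
       - ((\<Sum>t\<in>{1..T}. \<integral>\<omega>. expu \<alpha> t (Yt t \<omega>) \<partial>M) - (\<Sum>t\<in>{1..T}. \<integral>\<omega>. expu \<alpha> t (Xt t \<omega>) \<partial>M))"
      by (simp add: gint sum_subtractf)
    then show ?thesis unfolding orth0 total_util_def Yt_def Xt_def by simp
  qed
  have snn: "0 \<le> (\<Sum>t\<in>{1..T}. \<integral>\<omega>. g t \<omega> \<partial>M)" by (rule sum_nonneg) (rule gint_nn)
  show "total_util M r \<alpha> T Y \<le> total_util M r \<alpha> T Xo" using diff snn by linarith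
  assume le: "total_util M r \<alpha> T Xo \<le> total_util M r \<alpha> T Y"
  then have "(\<Sum>t\<in>{1..T}. \<integral>\<omega>. g t \<omega> \<partial>M) = 0" using diff snn by linarith
  then have z: "\<forall>t\<in>{1..T}. (\<integral>\<omega>. g t \<omega> \<partial>M) = 0"
    using sum_nonneg_eq_0_iff[of "{1..T}" "\<lambda>t. \<integral>\<omega>. g t \<omega> \<partial>M"] gint_nn by auto
  show "\<forall>t\<in>{1..T}. AE \<omega> in M. Y t \<omega> = Xo t \<omega>"
  proof
    fix t assume t: "t \<in> {1..T}"
    have a: "\<alpha> t > 0" using apos t by auto
    have gp: "AE \<omega> in M. 0 \<le> g t \<omega>" using gpos by eventually_elim (use t in auto)
    have "AE \<omega> in M. g t \<omega> = 0"
      using integral_nonneg_eq_0_iff_AE[OF intg[OF t] gp] z t by auto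
    then show "AE \<omega> in M. Y t \<omega> = Xo t \<omega>" using MX good
    proof eventually_elim
      case (elim \<omega>)
      have "Yt t \<omega> = Xt t \<omega>"
        by (rule conc_zero[OF a]) (use elim t in \<open>simp add: g_def D_def expu_def\<close>)
      moreover have "0 < disc r t \<omega>" using elim t by blast
      ultimately show ?case unfolding Yt_def Xt_def by simp
    qed
  qed
qed

lemma main:
  "(\<exists>X. optimal M F r \<alpha> T W X) \<and>
   (\<forall>X. optimal M F r \<alpha> T W X \<longleftrightarrow>
        admissible M F r T W X \<and>
        (\<forall>t\<in>{1..T}. AE \<omega> in M.
            X t \<omega> = - (disc r t \<omega> / \<alpha> t) * ln (Mfun M F \<alpha> T W t \<omega>)))"
proof -
  have optX: "optimal M F r \<alpha> T W Xo"
    unfolding optimal_def using Xo_adm gap(1) by blast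
  have eq: "X t \<omega> = - (disc r t \<omega> / \<alpha> t) * ln (Mfun M F \<alpha> T W t \<omega>) \<longleftrightarrow> X t \<omega> = Xo t \<omega>" for X t \<omega>
    by (simp add: Xo_def)
  have iff: "optimal M F r \<alpha> T W X \<longleftrightarrow> admissible M F r T W X \<and> (\<forall>t\<in>{1..T}. AE \<omega> in M. X t \<omega> = Xo t \<omega>)" for X
  proof
    assume o: "optimal M F r \<alpha> T W X"
    then have "admissible M F r T W X" "total_util M r \<alpha> T Xo \<le> total_util M r \<alpha> T X"
      using Xo_adm unfolding optimal_def by auto
    then show "admissible M F r T W X \<and> (\<forall>t\<in>{1..T}. AE \<omega> in M. X t \<omega> = Xo t \<omega>)"
      using gap(2) by blast
  next
    assume h: "admissible M F r T W X \<and> (\<forall>t\<in>{1..T}. AE \<omega> in M. X t \<omega> = Xo t \<omega>)"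
    have "total_util M r \<alpha> T X = total_util M r \<alpha> T Xo"
      unfolding total_util_def
    proof (intro sum.cong refl integral_cong_AE)
      fix t assume t: "t \<in> {1..T}"
      have Xm: "X t \<in> borel_measurable (F t)" using h t unfolding admissible_def by auto
      show "(\<lambda>\<omega>. expu \<alpha> t (X t \<omega> / disc r t \<omega>)) \<in> borel_measurable M"
        using measM[OF _ Xm] measM[OF _ disc_meas[OF t]] t by (intro expu_meas) auto
      show "(\<lambda>\<omega>. expu \<alpha> t (Xo t \<omega> / disc r t \<omega>)) \<in> borel_measurable M"
        using measM[OF _ Xo_meas[OF t]] measM[OF _ disc_meas[OF t]] t by (intro expu_meas) auto
      show "AE \<omega> in M. expu \<alpha> t (X t \<omega> / disc r t \<omega>) = expu \<alpha> t (Xo t \<omega> / disc r t \<omega>)"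
      proof -
        have "AE \<omega> in M. X t \<omega> = Xo t \<omega>" using h t by blast
        then show ?thesis by eventually_elim simp
      qed
    qed
    then show "optimal M F r \<alpha> T W X" using optX h unfolding optimal_def by simp
  qed
  show ?thesis
  proof (intro conjI allI)
    show "\<exists>X. optimal M F r \<alpha> T W X" using optX by blast
    fix X show "optimal M F r \<alpha> T W X \<longleftrightarrow> admissible M F r T W X \<and>
        (\<forall>t\<in>{1..T}. AE \<omega> in M.
            X t \<omega> = - (disc r t \<omega> / \<alpha> t) * ln (Mfun M F \<alpha> T W t \<omega>))"
      using iff[of X] unfolding Xo_def .
  qed
qed

end

theorem theorem3p2:
  fixes M :: "'a measure" and F :: "nat \<Rightarrow> 'a measure" and T :: nat
    and r :: "nat \<Rightarrow> 'a \<Rightarrow> real" and \<alpha> :: "nat \<Rightarrow> real" and W :: "'a \<Rightarrow> real"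
  assumes "prob_space M"
    and "T \<ge> 1"
    and "\<And>t. t \<le> T \<Longrightarrow> subalgebra M (F t)"
    and "\<And>s t. s \<le> t \<Longrightarrow> t \<le> T \<Longrightarrow> sets (F s) \<subseteq> sets (F t)"
    and "\<And>t. t \<in> {1..T} \<Longrightarrow> r t \<in> borel_measurable (F (t - 1))"
    and "\<exists>C. \<forall>t\<in>{1..T}. AE \<omega> in M. \<bar>r t \<omega>\<bar> \<le> C"
    and "\<And>t. t \<in> {1..T} \<Longrightarrow> AE \<omega> in M. r t \<omega> \<ge> 0"
    and "\<And>t. t \<in> {1..T} \<Longrightarrow> \<alpha> t > 0"
    and "W \<in> borel_measurable (F T)" and "ess_bounded M W"
  shows "(\<exists>X. optimal M F r \<alpha> T W X) \<and>
         (\<forall>X. optimal M F r \<alpha> T W X \<longleftrightarrow>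
              admissible M F r T W X \<and>
              (\<forall>t\<in>{1..T}. AE \<omega> in M.
                  X t \<omega> = - (disc r t \<omega> / \<alpha> t) * ln (Mfun M F \<alpha> T W t \<omega>)))"
proof -
  interpret setting M F T r \<alpha> W
    by (rule setting.intro[OF assms(1)], unfold_locales) (use assms in auto)
  show ?thesis by (rule main)
qed

end
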